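(* Let $\mathsf{T}$ be a rooted plane tree, let $\delta\in\mathcal{O}(\mathsf{T})$, and suppose $v$ wraps $u$ in $\delta$. Then the map $\delta_u^v\colon\mathsf{T}\to 2^{\mathsf{T}}$ defined by $\delta_u^v(v)=\delta(v)\setminus\Delta_{\delta(v)}(u)$ and $\delta_u^v(w)=\delta(w)$ for $w\neq v$ is an ornamentation of $\mathsf{T}$.
   Context: A rooted plane tree $\mathsf{T}$ is a finite tree with a distinguished root, regarded as a poset $\leq_\mathsf{T}$ in which $v'\leq_\mathsf{T} v$ iff $v$ lies on the path from $v'$ to the root. An ornament is a nonempty set of nodes inducing a connected subgraph. For a set $S$ of nodes and $u\in S$, $\Delta_S(u)=\{w\in S:w\leq_\mathsf{T} u\}$. An ornamentation is a map $\delta$ from $\mathsf{T}$ to ornaments such that the unique maximal element of $\delta(v)$ is $v$ and any two sets $\delta(v),\delta(v')$ are nested or disjoint; $\mathcal{O}(\mathsf{T})$ is the set of ornamentations. For distinct nodes $u,v$, we say $v$ wraps $u$ in $\delta$ if $\delta(u)\subseteq\delta(v)$ and there is no node $w$ with $\delta(u)\subsetneq\delta(w)\subsetneq\delta(v)$. *)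

theory Defs
  imports Main
begin

text \<open>The planar ordering of children plays no role in the
  statement and is therefore omitted.\<close>

definition rooted_tree :: "'a set \<Rightarrow> 'a \<Rightarrow> ('a \<Rightarrow> 'a) \<Rightarrow> bool" where
  "rooted_tree V r par \<longleftrightarrow> finite V \<and> r \<in> V \<and> par r = r \<and>
     (\<forall>v\<in>V. par v \<in> V) \<and> (\<forall>v\<in>V. \<exists>k. (par ^^ k) v = r)"

definition tleq :: "('a \<Rightarrow> 'a) \<Rightarrow> 'a \<Rightarrow> 'a \<Rightarrow> bool" where
  "tleq par v' v \<longleftrightarrow> (\<exists>k. (par ^^ k) v' = v)"

definition tless :: "('a \<Rightarrow> 'a) \<Rightarrow> 'a \<Rightarrow> 'a \<Rightarrow> bool" where
  "tless par v' v \<longleftrightarrow> tleq par v' v \<and> v' \<noteq> v"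

definition tadj :: "('a \<Rightarrow> 'a) \<Rightarrow> 'a \<Rightarrow> 'a \<Rightarrow> bool" where
  "tadj par x y \<longleftrightarrow> x \<noteq> y \<and> (par x = y \<or> par y = x)"

definition ornament :: "'a set \<Rightarrow> ('a \<Rightarrow> 'a) \<Rightarrow> 'a set \<Rightarrow> bool" where
  "ornament V par S \<longleftrightarrow> S \<noteq> {} \<and> S \<subseteq> V \<and>
     (\<forall>x\<in>S. \<forall>y\<in>S. (x, y) \<in> {(a, b). a \<in> S \<and> b \<in> S \<and> tadj par a b}\<^sup>*)"

definition is_maximal_in :: "('a \<Rightarrow> 'a) \<Rightarrow> 'a set \<Rightarrow> 'a \<Rightarrow> bool" where
  "is_maximal_in par S w \<longleftrightarrow> w \<in> S \<and> \<not> (\<exists>x\<in>S. tless par w x)"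

definition Delta :: "('a \<Rightarrow> 'a) \<Rightarrow> 'a set \<Rightarrow> 'a \<Rightarrow> 'a set" where
  "Delta par S u = {w \<in> S. tleq par w u}"

text \<open>An ornamentation: each \<delta>(v) is an ornament whose unique maximal element is v,
  and any two \<delta>(v), \<delta>(v') are nested or disjoint.  Values outside V are irrelevant.\<close>
definition ornamentation :: "'a set \<Rightarrow> ('a \<Rightarrow> 'a) \<Rightarrow> ('a \<Rightarrow> 'a set) \<Rightarrow> bool" where
  "ornamentation V par \<delta> \<longleftrightarrow>
     (\<forall>v\<in>V. ornament V par (\<delta> v) \<and> (\<forall>w. is_maximal_in par (\<delta> v) w \<longleftrightarrow> w = v)) \<and>
     (\<forall>v\<in>V. \<forall>v'\<in>V. \<delta> v \<subseteq> \<delta> v' \<or> \<delta> v' \<subseteq> \<delta> v \<or> \<delta> v \<inter> \<delta> v' = {})"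

definition wraps :: "'a set \<Rightarrow> ('a \<Rightarrow> 'a set) \<Rightarrow> 'a \<Rightarrow> 'a \<Rightarrow> bool" where
  "wraps V \<delta> v u \<longleftrightarrow> u \<in> V \<and> v \<in> V \<and> u \<noteq> v \<and> \<delta> u \<subseteq> \<delta> v \<and>
     \<not> (\<exists>w\<in>V. \<delta> u \<subset> \<delta> w \<and> \<delta> w \<subset> \<delta> v)"

end

theory Submission
  imports Defs
begin

lemma funpow_root: "par r = r \<Longrightarrow> (par ^^ k) r = r"
  by (induct k) auto

lemma tleq_refl: "tleq par x x"
  unfolding tleq_def by (rule exI[of _ 0]) simp

lemma tleq_trans: "tleq par a b \<Longrightarrow> tleq par b c \<Longrightarrow> tleq par a c"
proof -
  assume "tleq par a b" "tleq par b c"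
  then obtain i j where i: "(par ^^ i) a = b" and j: "(par ^^ j) b = c" unfolding tleq_def by blast
  have "(par ^^ (j + i)) a = c" using i j by (simp add: funpow_add)
  then show ?thesis unfolding tleq_def by blast
qed

lemma tleq_par: "tleq par x (par x)"
  unfolding tleq_def by (rule exI[of _ 1]) simp

lemma tleq_step: "tleq par a b \<Longrightarrow> a \<noteq> b \<Longrightarrow> tleq par (par a) b"
proof -
  assume "tleq par a b" "a \<noteq> b"
  then obtain k where k: "(par ^^ k) a = b" unfolding tleq_def by blast
  with \<open>a \<noteq> b\<close> obtain m where "k = Suc m" by (cases k) auto
  with k have "(par ^^ m) (par a) = b" by (simp add: funpow_Suc_right del: funpow.simps)
  then show ?thesis unfolding tleq_def by blast
qed

lemma tleq_comp: "tleq par z a \<Longrightarrow> tleq par z b \<Longrightarrow> tleq par a b \<or> tleq par b a"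
proof -
  assume "tleq par z a" "tleq par z b"
  then obtain i j where i: "(par ^^ i) z = a" and j: "(par ^^ j) z = b" unfolding tleq_def by blast
  show ?thesis
  proof (cases "i \<le> j")
    case True
    then obtain d where "j = d + i" by (metis le_add_diff_inverse2)
    with i j have "(par ^^ d) a = b" by (simp add: funpow_add)
    then show ?thesis unfolding tleq_def by blast
  next
    case False
    then obtain d where "i = d + j" by (metis le_add_diff_inverse2 nat_le_linear)
    with i j have "(par ^^ d) b = a" by (simp add: funpow_add)
    then show ?thesis unfolding tleq_def by blast
  qed
qed

lemma rt_root:
  assumes "rooted_tree V r par" "x \<in> V" "par x = x" shows "x = r"
proof -
  obtain k where "(par ^^ k) x = r" using assms unfolding rooted_tree_def by blast
  moreover have "(par ^^ k) x = x" using assms(3) by (induct k) auto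
  ultimately show ?thesis by simp
qed

lemma antisym_t:
  assumes rt: "rooted_tree V r par" and a: "a \<in> V" and ab: "tleq par a b" and ba: "tleq par b a"
  shows "a = b"
proof -
  obtain i where i: "(par ^^ i) a = b" using ab unfolding tleq_def by blast
  obtain j where j: "(par ^^ j) b = a" using ba unfolding tleq_def by blast
  show ?thesis
  proof (cases "i + j = 0")
    case True then show ?thesis using i by simp
  next
    case False
    let ?p = "j + i"
    have per: "(par ^^ ?p) a = a" using i j by (simp add: funpow_add)
    have pern: "(par ^^ (n * ?p)) a = a" for n
    proof (induct n)
      case 0 then show ?case by simp
    next
      case (Suc n)
      have "(par ^^ (Suc n * ?p)) a = (par ^^ ?p) ((par ^^ (n * ?p)) a)"
        by (simp add: funpow_add)
      then show ?case using Suc per by simp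
    qed
    have pr: "par r = r" using rt unfolding rooted_tree_def by blast
    obtain k where k: "(par ^^ k) a = r" using rt a unfolding rooted_tree_def by blast
    have "1 \<le> ?p" using False by arith
    then have "k * 1 \<le> k * ?p" by (rule mult_le_mono2)
    then have "k \<le> k * ?p" by simp
    define d where "d = k * ?p - k"
    have d: "k * ?p = d + k" unfolding d_def using \<open>k \<le> k * ?p\<close> by simp
    have "(par ^^ (k * ?p)) a = (par ^^ d) ((par ^^ k) a)" unfolding d by (simp add: funpow_add)
    also have "\<dots> = r" using k funpow_root[of par r, OF pr] by simp
    finally have "a = r" using pern by simp
    then show ?thesis using i funpow_root[of par r, OF pr] by simp
  qed
qed

lemma par_in: "rooted_tree V r par \<Longrightarrow> x \<in> V \<Longrightarrow> par x \<in> V"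
  unfolding rooted_tree_def by blast

lemma funpow_in: "rooted_tree V r par \<Longrightarrow> x \<in> V \<Longrightarrow> (par ^^ k) x \<in> V"
proof (induct k)
  case 0 then show ?case by simp
next
  case (Suc k) then show ?case using par_in[of V r par "(par ^^ k) x"] by simp
qed

lemma convex_walk:
  assumes "(x, z) \<in> {(a, b). a \<in> S \<and> b \<in> S \<and> tadj par a b}\<^sup>*"
  shows "tleq par x y \<Longrightarrow> \<not> tleq par z y \<Longrightarrow> y \<in> S"
  using assms
proof (induction z rule: rtrancl_induct)
  case base then show ?case by simp
next
  case (step c d)
  have ay: "tleq par x y" and dy: "\<not> tleq par d y" using step.prems by auto
  have cd: "c \<in> S" "tadj par c d" using step.hyps(2) by auto
  show ?case
  proof (cases "tleq par c y")
    case False show ?thesis using step.IH[OF ay False] .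
  next
    case True
    show ?thesis
    proof (cases "par c = d")
      case pcd: True
      have "c = y"
      proof (rule ccontr)
        assume "c \<noteq> y"
        then have "tleq par (par c) y" using tleq_step[OF True] by simp
        then show False using pcd dy by simp
      qed
      then show ?thesis using cd by simp
    next
      case False
      then have "par d = c" using cd unfolding tadj_def by blast
      then have "tleq par d c" using tleq_par[of par d] by simp
      then have "tleq par d y" using True by (rule tleq_trans)
      then show ?thesis using dy by simp
    qed
  qed
qed
lemma convex:
  assumes rt: "rooted_tree V r par" and orn: "ornament V par S" and x: "x \<in> S" and v: "v \<in> S"
    and xy: "tleq par x y" and yv: "tleq par y v"
  shows "y \<in> S"
proof (cases "tleq par v y")
  case True
  have "v \<in> V" using orn v unfolding ornament_def by blast
  then have "v = y" using antisym_t[OF rt _ True yv] by simp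
  then show ?thesis using v by simp
next
  case False
  have "(x, v) \<in> {(a, b). a \<in> S \<and> b \<in> S \<and> tadj par a b}\<^sup>*"
    using orn x v unfolding ornament_def by blast
  then show ?thesis using convex_walk[OF _ xy False] by simp
qed

lemma below_top:
  assumes rt: "rooted_tree V r par" and orn: "ornament V par S"
    and top: "\<forall>w. is_maximal_in par S w \<longleftrightarrow> w = v" and x: "x \<in> S"
  shows "tleq par x v"
proof -
  have xV: "x \<in> V" using orn x unfolding ornament_def by blast
  have pr: "par r = r" using rt unfolding rooted_tree_def by blast
  obtain n where n: "(par ^^ n) x = r" using rt xV unfolding rooted_tree_def by blast
  define K where "K = {k. k \<le> n \<and> (par ^^ k) x \<in> S}"
  have fK: "finite K" unfolding K_def by simp
  have "0 \<in> K" unfolding K_def using x by simp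
  then have ne: "K \<noteq> {}" by blast
  define k where "k = Max K"
  have kK: "k \<in> K" unfolding k_def using fK ne by simp
  have kmax: "\<And>m. m \<in> K \<Longrightarrow> m \<le> k" unfolding k_def using fK by simp
  define y where "y = (par ^^ k) x"
  have yS: "y \<in> S" using kK unfolding K_def y_def by simp
  have "is_maximal_in par S y"
    unfolding is_maximal_in_def
  proof (intro conjI yS notI)
    assume "\<exists>z\<in>S. tless par y z"
    then obtain z where zS: "z \<in> S" and yz: "tless par y z" by blast
    have yz1: "tleq par y z" and zy: "z \<noteq> y" using yz unfolding tless_def by auto
    from yz1 obtain m where m: "(par ^^ m) y = z" unfolding tleq_def by blast
    have "m \<noteq> 0"
    proof
      assume "m = 0"
      then show False using m zy by simp
    qed
    then have m1: "m \<ge> 1" by simp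
    have z: "(par ^^ (m + k)) x = z" using m unfolding y_def by (simp add: funpow_add)
    show False
    proof (cases "m + k \<le> n")
      case True
      then have "m + k \<in> K" unfolding K_def using z zS by simp
      then have "m + k \<le> k" by (rule kmax)
      then show False using m1 by simp
    next
      case False
      define d where "d = m + k - n"
      have d: "m + k = d + n" unfolding d_def using False by simp
      have "z = (par ^^ d) ((par ^^ n) x)" using z unfolding d by (simp add: funpow_add)
      then have zr: "z = r" using n funpow_root[of par r, OF pr] by simp
      then have "n \<in> K" unfolding K_def using n zS by simp
      then have "n \<le> k" by (rule kmax)
      moreover have "k \<le> n" using kK unfolding K_def by simp
      ultimately have "k = n" by simp
      then have "y = r" unfolding y_def using n by simp
      then show False using zr zy by simp
    qed
  qed
  then have "y = v" using top by blast
  then show ?thesis unfolding tleq_def y_def by blast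
qed

theorem lemma2p2:
  assumes "rooted_tree V r par"
    and "ornamentation V par \<delta>"
    and "wraps V \<delta> v u"
  shows "ornamentation V par (\<delta>(v := \<delta> v - Delta par (\<delta> v) u))"
proof -
  note rt = assms(1)
  have orn: "\<And>w. w \<in> V \<Longrightarrow> ornament V par (\<delta> w)"
    and top: "\<And>w. w \<in> V \<Longrightarrow> \<forall>x. is_maximal_in par (\<delta> w) x \<longleftrightarrow> x = w"
    and lam: "\<And>a b. a \<in> V \<Longrightarrow> b \<in> V \<Longrightarrow> \<delta> a \<subseteq> \<delta> b \<or> \<delta> b \<subseteq> \<delta> a \<or> \<delta> a \<inter> \<delta> b = {}"
    using assms(2) unfolding ornamentation_def by blast+
  have uV: "u \<in> V" and vV: "v \<in> V" and uv: "u \<noteq> v" and usub: "\<delta> u \<subseteq> \<delta> v"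
    and nostrict: "\<And>w. w \<in> V \<Longrightarrow> \<not> (\<delta> u \<subset> \<delta> w \<and> \<delta> w \<subset> \<delta> v)"
    using assms(3) unfolding wraps_def by blast+
  have self: "\<And>w. w \<in> V \<Longrightarrow> w \<in> \<delta> w"
    using top unfolding is_maximal_in_def by blast
  have bt: "\<And>w x. w \<in> V \<Longrightarrow> x \<in> \<delta> w \<Longrightarrow> tleq par x w"
    using below_top[OF rt orn top] by blast
  have sV: "\<And>w. w \<in> V \<Longrightarrow> \<delta> w \<subseteq> V" using orn unfolding ornament_def by blast
  define D where "D = \<delta> v - Delta par (\<delta> v) u"
  have Dsub: "D \<subseteq> \<delta> v" unfolding D_def by blast
  have memD: "\<And>x. x \<in> D \<longleftrightarrow> x \<in> \<delta> v \<and> \<not> tleq par x u" unfolding D_def Delta_def by blast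
  have "u \<in> \<delta> v" using self[OF uV] usub by blast
  then have uleqv: "tleq par u v" using bt vV by blast
  have vD: "v \<in> D"
  proof -
    have "\<not> tleq par v u" using antisym_t[OF rt uV uleqv] uv by blast
    then show ?thesis using memD self[OF vV] by blast
  qed
  have upD: "\<And>x. x \<in> D \<Longrightarrow> x \<noteq> v \<Longrightarrow> par x \<in> D \<and> tless par x (par x)"
  proof -
    fix x assume xD: "x \<in> D" and xv: "x \<noteq> v"
    have xdv: "x \<in> \<delta> v" and xu: "\<not> tleq par x u" using memD xD by auto
    have xle: "tleq par x v" using bt[OF vV xdv] .
    have "tleq par (par x) v" using tleq_step[OF xle xv] .
    then have pdv: "par x \<in> \<delta> v" using convex[OF rt orn[OF vV] xdv self[OF vV] tleq_par[of par x]] by simp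
    have "\<not> tleq par (par x) u"
    proof
      assume "tleq par (par x) u"
      with tleq_par[of par x] have "tleq par x u" by (rule tleq_trans)
      then show False using xu by simp
    qed
    then have "par x \<in> D" using memD pdv by blast
    moreover have "par x \<noteq> x"
    proof
      assume px: "par x = x"
      have xVV: "x \<in> V" using sV[OF vV] xdv by blast
      have "x = r" using rt_root[OF rt xVV px] .
      have pr: "par r = r" using rt unfolding rooted_tree_def by blast
      obtain k where "(par ^^ k) x = v" using xle unfolding tleq_def by blast
      then have "v = x" using funpow_root[of par r, OF pr] \<open>x = r\<close> by simp
      then show False using xv by simp
    qed
    ultimately show "par x \<in> D \<and> tless par x (par x)" unfolding tless_def using tleq_par by metis
  qed
  let ?R = "{(a, b). a \<in> D \<and> b \<in> D \<and> tadj par a b}"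
  have chain: "\<And>x. (par ^^ k) x = v \<Longrightarrow> x \<in> D \<Longrightarrow> (x, v) \<in> ?R\<^sup>* \<and> (v, x) \<in> ?R\<^sup>*" for k
  proof (induct k)
    case 0 then show ?case by simp
  next
    case (Suc k x)
    show ?case
    proof (cases "x = v")
      case True then show ?thesis by simp
    next
      case False
      have pD: "par x \<in> D" and ne: "x \<noteq> par x" using upD[OF Suc(3) False] unfolding tless_def by auto
      have "(par ^^ k) (par x) = v" using Suc(2) by (simp add: funpow_Suc_right del: funpow.simps)
      then have IH: "(par x, v) \<in> ?R\<^sup>* \<and> (v, par x) \<in> ?R\<^sup>*" using Suc(1) pD by blast
      have e1: "(x, par x) \<in> ?R" using Suc(3) pD ne unfolding tadj_def by auto
      have e2: "(par x, x) \<in> ?R" using Suc(3) pD ne unfolding tadj_def by auto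
      show ?thesis using IH e1 e2
        by (meson converse_rtrancl_into_rtrancl rtrancl_into_rtrancl)
    qed
  qed
  have conn: "\<And>x. x \<in> D \<Longrightarrow> (x, v) \<in> ?R\<^sup>* \<and> (v, x) \<in> ?R\<^sup>*"
  proof -
    fix x assume xD: "x \<in> D"
    then obtain k where "(par ^^ k) x = v" using bt[OF vV] Dsub unfolding tleq_def by blast
    then show "(x, v) \<in> ?R\<^sup>* \<and> (v, x) \<in> ?R\<^sup>*" using chain xD by blast
  qed
  have ornD: "ornament V par D"
    unfolding ornament_def
  proof (intro conjI ballI)
    show "D \<noteq> {}" using vD by blast
    show "D \<subseteq> V" using Dsub sV[OF vV] by blast
    fix x y assume "x \<in> D" "y \<in> D"
    then show "(x, y) \<in> ?R\<^sup>*" using conn by (meson rtrancl_trans)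
  qed
  have topD: "\<forall>w. is_maximal_in par D w \<longleftrightarrow> w = v"
  proof (intro allI iffI)
    fix w assume "is_maximal_in par D w"
    then show "w = v" using upD unfolding is_maximal_in_def by blast
  next
    fix w assume "w = v"
    have "is_maximal_in par (\<delta> v) v" using top[OF vV] by blast
    then show "is_maximal_in par D w" using Dsub vD \<open>w = v\<close> unfolding is_maximal_in_def by blast
  qed
  have core: "\<And>w. w \<in> V \<Longrightarrow> w \<noteq> v \<Longrightarrow> D \<subseteq> \<delta> w \<or> \<delta> w \<subseteq> D \<or> D \<inter> \<delta> w = {}"
  proof -
    fix w assume wV: "w \<in> V" and wv: "w \<noteq> v"
    consider "\<delta> v \<subseteq> \<delta> w" | "\<delta> w \<subseteq> \<delta> v" | "\<delta> v \<inter> \<delta> w = {}" using lam[OF vV wV] by blast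
    then show "D \<subseteq> \<delta> w \<or> \<delta> w \<subseteq> D \<or> D \<inter> \<delta> w = {}"
    proof cases
      case 1 then show ?thesis using Dsub by blast
    next
      case 3 then show ?thesis using Dsub by blast
    next
      case 2
      show ?thesis
      proof (cases "tleq par w u")
        case True
        have "\<And>z. z \<in> \<delta> w \<Longrightarrow> z \<notin> D"
        proof -
          fix z assume "z \<in> \<delta> w"
          then have "tleq par z w" by (rule bt[OF wV])
          then have "tleq par z u" using True by (rule tleq_trans)
          then show "z \<notin> D" using memD by blast
        qed
        then show ?thesis by blast
      next
        case False
        show ?thesis
        proof (cases "\<delta> w \<subseteq> D")
          case True then show ?thesis by blast
        next
          case nsub: False
          then obtain z where zw: "z \<in> \<delta> w" and zD: "z \<notin> D" by blast
          have zu: "tleq par z u" using zD memD zw 2 by blast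
          have zw': "tleq par z w" using bt[OF wV zw] .
          have uw: "tleq par u w" using tleq_comp[OF zu zw'] False by blast
          have uinw: "u \<in> \<delta> w" using convex[OF rt orn[OF wV] zw self[OF wV] zu uw] .
          have "\<delta> u \<subseteq> \<delta> w"
          proof -
            have "\<not> \<delta> w \<subseteq> \<delta> u" using self[OF wV] bt[OF uV] False by blast
            moreover have "\<delta> u \<inter> \<delta> w \<noteq> {}" using uinw self[OF uV] by blast
            ultimately show ?thesis using lam[OF uV wV] by blast
          qed
          moreover have "\<delta> u \<noteq> \<delta> w" using self[OF wV] bt[OF uV] False by blast
          ultimately have "\<delta> w = \<delta> v" using nostrict[OF wV] 2 by blast
          then show ?thesis using Dsub by blast
        qed
      qed
    qed
  qed
  let ?d = "\<delta>(v := D)"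
  have p1: "ornament V par (?d w) \<and> (\<forall>x. is_maximal_in par (?d w) x \<longleftrightarrow> x = w)" if wV: "w \<in> V" for w
  proof (cases "w = v")
    case True then show ?thesis using ornD topD by simp
  next
    case False then show ?thesis using orn[OF wV] top[OF wV] by simp
  qed
  have p2: "?d a \<subseteq> ?d b \<or> ?d b \<subseteq> ?d a \<or> ?d a \<inter> ?d b = {}" if aV: "a \<in> V" and bV: "b \<in> V" for a b
  proof (cases "a = v")
    case True
    show ?thesis
    proof (cases "b = v")
      case True then show ?thesis using \<open>a = v\<close> by simp
    next
      case False then show ?thesis using \<open>a = v\<close> core[OF bV False] by auto
    qed
  next
    case False
    show ?thesis
    proof (cases "b = v")
      case True then show ?thesis using False core[OF aV False] by auto
    next
      case bF: False then show ?thesis using False lam[OF aV bV] by simp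
    qed
  qed
  show ?thesis
    unfolding ornamentation_def D_def[symmetric] using p1 p2 by blast
qed

end
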